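(* Let $\alpha\in[0,1)$ and $0<a<b<1$. There exists $\mu(\alpha,a,b)>0$ such that $\int_a^b\tilde\Phi_{\alpha,m}(x)^2\,dx\ge\mu(\alpha,a,b)$ for all $m\ge1$.
   Context: Let $\nu_\alpha=\frac{1-\alpha}{2-\alpha}$, $\kappa_\alpha=\frac{2-\alpha}2$. For real $\mu$, $J_\mu$ is the Bessel function of the first kind of order $\mu$ and $0<j_{\mu,1}<j_{\mu,2}<\cdots$ its positive zeros. Let $\Phi^{(o)}_{\alpha,n}$ be the odd function on $(-1,1)$ equal to $x^{\frac{1-\alpha}2}J_{\nu_\alpha}(j_{\nu_\alpha,n}x^{\kappa_\alpha})$ for $x\in(0,1)$, and $\Phi^{(e)}_{\alpha,n}$ the even function equal to $|x|^{\frac{1-\alpha}2}J_{-\nu_\alpha}(j_{-\nu_\alpha,n}|x|^{\kappa_\alpha})$ for $x\ne0$. Define for $n\ge1$: $\tilde\Phi_{\alpha,2n-1}=\frac{\sqrt{\kappa_\alpha}}{|J'_{-\nu_\alpha}(j_{-\nu_\alpha,n})|}\Phi^{(e)}_{\alpha,n}$ and $\tilde\Phi_{\alpha,2n}=\frac{\sqrt{\kappa_\alpha}}{|J'_{\nu_\alpha}(j_{\nu_\alpha,n})|}\Phi^{(o)}_{\alpha,n}$. *)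

theory Defs
  imports "HOL-Analysis.Analysis"
begin

text \<open>Bessel function of the first kind of real order mu, for x > 0, via its power series
  J_mu(x) = sum_k (-1)^k / (k! Gamma(k+mu+1)) (x/2)^(2k+mu), with 1/Gamma = rGamma (entire).\<close>
definition bessel_J :: "real \<Rightarrow> real \<Rightarrow> real" where
  "bessel_J mu x = (\<Sum>k. (-1) ^ k * rGamma (real k + mu + 1) / fact k * (x / 2) powr (2 * real k + mu))"

definition bessel_zero :: "real \<Rightarrow> nat \<Rightarrow> real" where
  "bessel_zero mu n = (THE x. 0 < x \<and> bessel_J mu x = 0 \<and>
      card {y. 0 < y \<and> y < x \<and> bessel_J mu y = 0} = n - 1)"

definition nu_alpha :: "real \<Rightarrow> real" where
  "nu_alpha \<alpha> = (1 - \<alpha>) / (2 - \<alpha>)"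

definition kappa_alpha :: "real \<Rightarrow> real" where
  "kappa_alpha \<alpha> = (2 - \<alpha>) / 2"

definition Phi_o :: "real \<Rightarrow> nat \<Rightarrow> real \<Rightarrow> real" where
  "Phi_o \<alpha> n x =
     (let f = (\<lambda>t. t powr ((1 - \<alpha>) / 2) *
                 bessel_J (nu_alpha \<alpha>) (bessel_zero (nu_alpha \<alpha>) n * t powr kappa_alpha \<alpha>))
      in if x > 0 then f x else if x < 0 then - f (- x) else 0)"

text \<open>Even eigenfunction on (-1,1) (value at 0 irrelevant; set to 0).\<close>
definition Phi_e :: "real \<Rightarrow> nat \<Rightarrow> real \<Rightarrow> real" where
  "Phi_e \<alpha> n x =
     (if x = 0 then 0 else
        \<bar>x\<bar> powr ((1 - \<alpha>) / 2) *
        bessel_J (- nu_alpha \<alpha>) (bessel_zero (- nu_alpha \<alpha>) n * \<bar>x\<bar> powr kappa_alpha \<alpha>))"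

text \<open>Normalized eigenfunctions: index 2n-1 is even, index 2n is odd (n \<ge> 1).\<close>
definition Phi_tilde :: "real \<Rightarrow> nat \<Rightarrow> real \<Rightarrow> real" where
  "Phi_tilde \<alpha> m x =
     (if odd m then
        (let n = (m + 1) div 2; mu = - nu_alpha \<alpha> in
          sqrt (kappa_alpha \<alpha>) / \<bar>deriv (bessel_J mu) (bessel_zero mu n)\<bar> * Phi_e \<alpha> n x)
      else
        (let n = m div 2; mu = nu_alpha \<alpha> in
          sqrt (kappa_alpha \<alpha>) / \<bar>deriv (bessel_J mu) (bessel_zero mu n)\<bar> * Phi_o \<alpha> n x))"

end

theory Submission
  imports Defs
begin

definition cB :: "real \<Rightarrow> nat \<Rightarrow> real" where
  "cB mu k = (-1) ^ k * rGamma (real k + mu + 1) / fact k"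

definition GB :: "real \<Rightarrow> real \<Rightarrow> real" where
  "GB mu y = (\<Sum>k. cB mu k * y ^ k)"
definition G1 :: "real \<Rightarrow> real \<Rightarrow> real" where
  "G1 mu y = (\<Sum>k. diffs (cB mu) k * y ^ k)"
definition G2 :: "real \<Rightarrow> real \<Rightarrow> real" where
  "G2 mu y = (\<Sum>k. diffs (diffs (cB mu)) k * y ^ k)"

lemma cB_Suc:
  assumes "mu > -1"
  shows "cB mu (Suc k) = - cB mu k / ((real k + mu + 1) * (real k + 1))"
proof -
  have ne: "real k + mu + 1 \<noteq> 0" using assms by linarith
  have r: "rGamma (real (Suc k) + mu + 1) = rGamma (real k + mu + 1) / (real k + mu + 1)"
    using rGamma_plus1[of "real k + mu + 1"] ne by (simp add: field_simps add_ac)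
  show ?thesis unfolding cB_def r by (simp add: field_simps)
qed

lemma cB_summable:
  assumes "mu > -1"
  shows "summable (\<lambda>k. cB mu k * y ^ k)"
proof (rule summable_ratio_test[where c="1/2" and N="nat \<lceil>2 * \<bar>y\<bar>\<rceil> + 1"])
  fix n assume n: "n \<ge> nat \<lceil>2 * \<bar>y\<bar>\<rceil> + 1"
  have n1: "real n \<ge> 2 * \<bar>y\<bar>" "real n \<ge> 1" using n by linarith+
  have pos: "(real n + mu + 1) * (real n + 1) \<ge> 2 * \<bar>y\<bar>"
  proof -
    have "real n + mu + 1 \<ge> 1" using assms n1 by linarith
    moreover have "real n + 1 \<ge> 2 * \<bar>y\<bar>" using n1 by linarith
    ultimately show ?thesis using mult_mono[of 1 "real n + mu + 1" "2*\<bar>y\<bar>" "real n + 1"] by simp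
  qed
  have pp: "(real n + mu + 1) * (real n + 1) > 0" using assms n1 by (intro mult_pos_pos) linarith+
  have "norm (cB mu (Suc n) * y ^ Suc n) = \<bar>cB mu n * y ^ n\<bar> * (\<bar>y\<bar> / ((real n + mu + 1) * (real n + 1)))"
    using pp by (simp add: cB_Suc[OF assms] abs_mult abs_divide power_abs field_simps)
  also have "\<dots> \<le> \<bar>cB mu n * y ^ n\<bar> * (1/2)"
    using pp pos by (intro mult_left_mono) (auto simp: field_simps)
  finally show "norm (cB mu (Suc n) * y ^ Suc n) \<le> 1/2 * norm (cB mu n * y ^ n)" by simp
qed simp

lemma d1_summable: "mu > -1 \<Longrightarrow> summable (\<lambda>k. diffs (cB mu) k * y ^ k)"
  by (rule termdiff_converges_all) (rule cB_summable)

lemma d2_summable: "mu > -1 \<Longrightarrow> summable (\<lambda>k. diffs (diffs (cB mu)) k * y ^ k)"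
  by (rule termdiff_converges_all) (rule d1_summable)

lemma GB_deriv: "mu > -1 \<Longrightarrow> (GB mu has_real_derivative G1 mu y) (at y)"
  unfolding GB_def[abs_def] G1_def
  by (rule termdiffs_strong_converges_everywhere) (rule cB_summable)

lemma G1_deriv: "mu > -1 \<Longrightarrow> (G1 mu has_real_derivative G2 mu y) (at y)"
  unfolding G1_def[abs_def] G2_def
  by (rule termdiffs_strong_converges_everywhere) (rule d1_summable)

lemma GB_zero: "GB mu 0 = rGamma (mu + 1)"
  unfolding GB_def using powser_zero[of "cB mu"] by (simp add: cB_def)

lemma GB_ode:
  assumes "mu > -1"
  shows "y * G2 mu y + (mu + 1) * G1 mu y + GB mu y = 0"
proof -
  define d1 where "d1 = diffs (cB mu)"
  define g where "g = (\<lambda>m. real m * d1 m * y ^ m)"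
  have s2: "summable (\<lambda>k. diffs d1 k * y ^ k)" unfolding d1_def using d2_summable[OF assms] .
  have eq: "(\<lambda>k. y * (diffs d1 k * y ^ k)) = (\<lambda>k. g (Suc k))"
    by (auto simp: g_def diffs_def field_simps)
  have sg: "summable (\<lambda>k. g (Suc k))" unfolding eq[symmetric] using summable_mult[OF s2] .
  hence sg': "summable g" using summable_Suc_iff by blast
  have "y * G2 mu y = (\<Sum>k. y * (diffs d1 k * y ^ k))"
    unfolding G2_def d1_def[symmetric] using suminf_mult[OF s2] by simp
  also have "\<dots> = suminf g" unfolding eq using suminf_split_head[OF sg'] by (simp add: g_def)
  finally have e2: "y * G2 mu y = suminf g" .
  have s1: "summable (\<lambda>k. d1 k * y ^ k)" unfolding d1_def using d1_summable[OF assms] .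
  have s0: "summable (\<lambda>k. cB mu k * y ^ k)" using cB_summable[OF assms] .
  have coef: "g k + (mu + 1) * (d1 k * y ^ k) + cB mu k * y ^ k = 0" for k
  proof -
    have p1: "real k + mu + 1 > 0" using assms by linarith
    have p2: "real k + 1 > 0" by simp
    have ne: "(real k + mu + 1) * (real k + 1) \<noteq> 0" using mult_pos_pos[OF p1 p2] by linarith
    have "g k + (mu + 1) * (d1 k * y ^ k) = (real k + mu + 1) * (real k + 1) * cB mu (Suc k) * y ^ k"
      unfolding g_def d1_def diffs_def by (simp add: algebra_simps)
    also have "\<dots> = ((real k + mu + 1) * (real k + 1)) * (- cB mu k / ((real k + mu + 1) * (real k + 1))) * y ^ k"
      unfolding cB_Suc[OF assms] by (rule refl)
    also have "\<dots> = - cB mu k * y ^ k" using ne by simp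
    finally show ?thesis by simp
  qed
  have "(\<lambda>k. g k + (mu + 1) * (d1 k * y ^ k) + cB mu k * y ^ k) sums
        (suminf g + (mu + 1) * (\<Sum>k. d1 k * y ^ k) + (\<Sum>k. cB mu k * y ^ k))"
    by (intro sums_add sums_mult summable_sums sg' s1 s0)
  hence "(\<lambda>k. 0::real) sums (suminf g + (mu + 1) * (\<Sum>k. d1 k * y ^ k) + (\<Sum>k. cB mu k * y ^ k))"
    using coef by simp
  hence "suminf g + (mu + 1) * (\<Sum>k. d1 k * y ^ k) + (\<Sum>k. cB mu k * y ^ k) = 0"
    using sums_unique2[OF _ sums_zero] by metis
  thus ?thesis using e2 unfolding G1_def GB_def d1_def by simp
qed


definition FB :: "real \<Rightarrow> real \<Rightarrow> real" where
  "FB mu s = (s/2) powr mu * GB mu ((s/2)^2)"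
definition PB :: "real \<Rightarrow> real \<Rightarrow> real" where
  "PB mu s = (s/2) powr mu * (mu * GB mu ((s/2)^2) + 2 * (s/2)^2 * G1 mu ((s/2)^2))"

lemma powr_half_deriv:
  fixes mu s :: real
  assumes "s > 0"
  shows "((\<lambda>s. (s/2) powr mu) has_real_derivative (mu / s) * (s/2) powr mu) (at s)"
proof -
  have "((\<lambda>s. (s/2) powr mu) has_real_derivative (mu * (s/2) powr (mu - 1)) * (1/2)) (at s)"
    using DERIV_chain2[where f="\<lambda>z. z powr mu" and g="\<lambda>s. s/2", OF has_real_derivative_powr[of "s/2" mu]] assms
    by (auto intro!: derivative_eq_intros)
  moreover have "(mu * (s/2) powr (mu - 1)) * (1/2) = (mu / s) * (s/2) powr mu"
    using assms by (simp add: powr_diff field_simps)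
  ultimately show ?thesis by simp
qed

lemma sq_half_deriv: "((\<lambda>s. (s/2)^2) has_real_derivative s/2) (at (s::real))"
  by (auto intro!: derivative_eq_intros simp: field_simps)

lemma GB_comp_deriv:
  assumes "mu > -1"
  shows "((\<lambda>s. GB mu ((s/2)^2)) has_real_derivative G1 mu ((s/2)^2) * (s/2)) (at s)"
  using DERIV_chain2[OF GB_deriv[OF assms] sq_half_deriv] .

lemma G1_comp_deriv:
  assumes "mu > -1"
  shows "((\<lambda>s. G1 mu ((s/2)^2)) has_real_derivative G2 mu ((s/2)^2) * (s/2)) (at s)"
  using DERIV_chain2[OF G1_deriv[OF assms] sq_half_deriv] .

lemma FB_deriv:
  assumes "mu > -1" "s > 0"
  shows "(FB mu has_real_derivative PB mu s / s) (at s)"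
  unfolding FB_def[abs_def]
  apply (rule DERIV_cong[OF DERIV_mult[OF powr_half_deriv[where mu=mu, OF assms(2)] GB_comp_deriv[OF assms(1)]]])
  using assms by (simp add: PB_def field_simps power2_eq_square)

lemma PB_deriv:
  assumes "mu > -1" "s > 0"
  shows "(PB mu has_real_derivative (mu^2 / s - s) * FB mu s) (at s)"
proof -
  define y where "y = (s/2)^2"
  have H: "((\<lambda>s. mu * GB mu ((s/2)^2) + 2 * (s/2)^2 * G1 mu ((s/2)^2)) has_real_derivative
      mu * (G1 mu y * (s/2)) + (2 * (s/2) * G1 mu y + 2 * y * (G2 mu y * (s/2)))) (at s)"
    unfolding y_def
    by (rule derivative_eq_intros GB_comp_deriv[OF assms(1)] G1_comp_deriv[OF assms(1)] sq_half_deriv refl | simp)+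
  have "(PB mu has_real_derivative (mu / s) * (s/2) powr mu * (mu * GB mu y + 2 * y * G1 mu y)
      + (s/2) powr mu * (mu * (G1 mu y * (s/2)) + (2 * (s/2) * G1 mu y + 2 * y * (G2 mu y * (s/2))))) (at s)"
    unfolding PB_def[abs_def] y_def
    by (rule DERIV_cong[OF DERIV_mult[OF powr_half_deriv[where mu=mu, OF assms(2)] H[unfolded y_def]]]) (simp add: algebra_simps)
  moreover have "(mu / s) * (s/2) powr mu * (mu * GB mu y + 2 * y * G1 mu y)
      + (s/2) powr mu * (mu * (G1 mu y * (s/2)) + (2 * (s/2) * G1 mu y + 2 * y * (G2 mu y * (s/2))))
      = (mu^2 / s - s) * FB mu s"
  proof -
    have ode: "y * G2 mu y = - (mu + 1) * G1 mu y - GB mu y" using GB_ode[OF assms(1), of y] by linarith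
    have ys: "y = s^2/4" unfolding y_def by (simp add: power2_eq_square)
    have e1: "2 * y * (G2 mu y * (s/2)) = s * (y * G2 mu y)" by simp
    have inner: "(mu / s) * (mu * GB mu y + 2 * y * G1 mu y)
      + (mu * (G1 mu y * (s/2)) + (2 * (s/2) * G1 mu y + 2 * y * (G2 mu y * (s/2))))
      = (mu^2 / s - s) * GB mu y"
      unfolding e1 ode using assms(2) by (simp add: ys field_simps power2_eq_square)
    have "(mu / s) * (s/2) powr mu * (mu * GB mu y + 2 * y * G1 mu y)
      + (s/2) powr mu * (mu * (G1 mu y * (s/2)) + (2 * (s/2) * G1 mu y + 2 * y * (G2 mu y * (s/2))))
      = (s/2) powr mu * ((mu / s) * (mu * GB mu y + 2 * y * G1 mu y)
      + (mu * (G1 mu y * (s/2)) + (2 * (s/2) * G1 mu y + 2 * y * (G2 mu y * (s/2)))))"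
      by (simp add: algebra_simps)
    also have "\<dots> = (s/2) powr mu * ((mu^2 / s - s) * GB mu y)" unfolding inner ..
    finally show ?thesis unfolding FB_def y_def by simp
  qed
  ultimately show ?thesis by simp
qed

lemma bessel_J_eq_FB:
  assumes "mu > -1" "s > 0"
  shows "bessel_J mu s = FB mu s"
proof -
  have "(\<lambda>k. (-1) ^ k * rGamma (real k + mu + 1) / fact k * (s / 2) powr (2 * real k + mu))
      = (\<lambda>k. (s/2) powr mu * (cB mu k * ((s/2)^2) ^ k))"
  proof
    fix k
    have "(s / 2) powr (2 * real k + mu) = (s/2) powr mu * ((s/2)^2)^k"
    proof -
      have "(s / 2) powr (2 * real k + mu) = (s/2) powr (real (2 * k)) * (s/2) powr mu"
        by (simp add: powr_add)
      also have "(s/2) powr (real (2 * k)) = (s/2) ^ (2 * k)" by (rule powr_realpow) (use assms(2) in simp)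
      also have "\<dots> = ((s/2)^2)^k" by (simp add: power_mult)
      finally show ?thesis by simp
    qed
    thus "(-1) ^ k * rGamma (real k + mu + 1) / fact k * (s / 2) powr (2 * real k + mu)
      = (s/2) powr mu * (cB mu k * ((s/2)^2) ^ k)" unfolding cB_def by simp
  qed
  thus ?thesis unfolding bessel_J_def FB_def GB_def using suminf_mult[OF cB_summable[OF assms(1)]] by simp
qed


definition uB :: "real \<Rightarrow> real \<Rightarrow> real" where "uB mu s = sqrt s * FB mu s"
definition rB :: "real \<Rightarrow> real \<Rightarrow> real" where "rB mu s = (FB mu s / 2 + PB mu s) / sqrt s"
definition qB :: "real \<Rightarrow> real \<Rightarrow> real" where "qB mu s = 1 + (1/4 - mu^2) / s^2"
definition EB :: "real \<Rightarrow> real \<Rightarrow> real" where "EB mu s = (rB mu s)^2 + qB mu s * (uB mu s)^2"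

lemma alg:
  fixes t P F m :: real
  assumes "t > 0"
  shows "((P / (t*t) / 2 + (m^2 / (t*t) - (t*t)) * F) * t - (F / 2 + P) * (inverse t / 2)) / (t * t)
     = - (1 + (1/4 - m^2) / (t*t)^2) * (t * F)"
  using assms by (simp add: field_simps power2_eq_square)

lemma uB_deriv:
  assumes "mu > -1" "s > 0"
  shows "(uB mu has_real_derivative rB mu s) (at s)"
  unfolding uB_def[abs_def]
  apply (rule DERIV_cong[OF DERIV_mult[OF DERIV_real_sqrt[OF assms(2)] FB_deriv[OF assms]]])
  using assms(2) by (simp add: rB_def field_simps)

lemma rB_deriv:
  assumes "mu > -1" "s > 0"
  shows "(rB mu has_real_derivative - qB mu s * uB mu s) (at s)"
proof -
  have N: "((\<lambda>s. FB mu s / 2 + PB mu s) has_real_derivative PB mu s / s / 2 + (mu^2 / s - s) * FB mu s) (at s)"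
    by (rule DERIV_cong[OF DERIV_add[OF DERIV_cdivide[OF FB_deriv[OF assms]] PB_deriv[OF assms]]]) simp
  have sq: "sqrt s * sqrt s = s" using assms(2) by simp
  have sp: "sqrt s > 0" using assms(2) by simp
  show ?thesis
    unfolding rB_def[abs_def]
    apply (rule DERIV_cong[OF DERIV_divide[OF N DERIV_real_sqrt[OF assms(2)]]])
    using sp apply simp
    apply (unfold qB_def uB_def sq)
    apply (rule alg[OF sp, of "PB mu s" mu "FB mu s", unfolded sq])
    done
qed

lemma qB_deriv:
  assumes "s > 0"
  shows "(qB mu has_real_derivative - 2 * (1/4 - mu^2) / s^3) (at s)"
  unfolding qB_def[abs_def]
  using assms by (auto intro!: derivative_eq_intros simp: field_simps power2_eq_square power3_eq_cube)

lemma EB_deriv: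
  assumes "mu > -1" "s > 0"
  shows "(EB mu has_real_derivative (- 2 * (1/4 - mu^2) / s^3) * (uB mu s)^2) (at s)"
  unfolding EB_def[abs_def]
  apply (rule DERIV_cong[OF DERIV_add[OF DERIV_power[OF rB_deriv[OF assms], of 2]
           DERIV_mult[OF qB_deriv[OF assms(2), of mu] DERIV_power[OF uB_deriv[OF assms], of 2]]]])
  by (simp add: algebra_simps power2_eq_square)

lemma qB_ge1: "mu^2 \<le> 1/4 \<Longrightarrow> qB mu s \<ge> 1"
  unfolding qB_def by simp

lemma alg2:
  fixes Q c s3 u r :: real
  assumes "Q \<ge> 1"
  shows "((- 2 * c / s3) * u^2 * Q - (r^2 + Q * u^2) * (- 2 * c / s3)) / (Q * Q) = (2 * c / s3) * r^2 / Q^2"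
proof (cases "s3 = 0")
  case False
  then show ?thesis using assms by (simp add: field_simps power2_eq_square)
qed simp

lemma EQ_deriv:
  assumes "mu > -1" "s > 0" "mu^2 \<le> 1/4"
  shows "((\<lambda>s. EB mu s / qB mu s) has_real_derivative (2 * (1/4 - mu^2) / s^3) * (rB mu s)^2 / (qB mu s)^2) (at s)"
  apply (rule DERIV_cong[OF DERIV_divide[OF EB_deriv[OF assms(1,2)] qB_deriv[OF assms(2), of mu]]])
  using qB_ge1[OF assms(3), of s] apply simp
  unfolding EB_def by (rule alg2[OF qB_ge1[OF assms(3)]])

lemma mu_gt:
  assumes "mu^2 \<le> 1/4" shows "mu > (-1::real)"
proof (rule ccontr)
  assume "\<not> mu > -1" hence "-mu \<ge> 1" by simp
  hence "(-mu)*(-mu) \<ge> 1*1" by (intro mult_mono) auto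
  thus False using assms by (simp add: power2_eq_square)
qed

lemma EB_noninc:
  assumes "mu^2 \<le> 1/4" "0 < s" "s \<le> t"
  shows "EB mu t \<le> EB mu s"
proof -
  have m: "mu > -1" using mu_gt[OF assms(1)] .
  show ?thesis
  proof (rule DERIV_nonpos_imp_nonincreasing[OF assms(3)])
    fix x assume "s \<le> x" "x \<le> t"
    hence x: "x > 0" using assms by simp
    have "(- 2 * (1/4 - mu^2) / x^3) * (uB mu x)^2 \<le> 0"
      using x assms(1) by (intro mult_nonpos_nonneg divide_nonpos_pos) auto
    thus "\<exists>y. DERIV (EB mu) x :> y \<and> y \<le> 0" using EB_deriv[OF m x] by blast
  qed
qed

lemma EQ_nondec:
  assumes "mu^2 \<le> 1/4" "0 < s" "s \<le> t"
  shows "EB mu s / qB mu s \<le> EB mu t / qB mu t"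
proof (rule DERIV_nonneg_imp_nondecreasing[OF assms(3)])
  fix x assume "s \<le> x" "x \<le> t"
  hence x: "x > 0" using assms by simp
  have "(2 * (1/4 - mu^2) / x^3) * (rB mu x)^2 / (qB mu x)^2 \<ge> 0"
    using x assms(1) by (intro divide_nonneg_nonneg mult_nonneg_nonneg) auto
  thus "\<exists>y. DERIV (\<lambda>s. EB mu s / qB mu s) x :> y \<and> y \<ge> 0"
    using EQ_deriv[OF mu_gt[OF assms(1)] x assms(1)] by blast
qed


lemma GB_near0:
  assumes "mu > -1"
  shows "\<exists>\<eta>>0. \<forall>y. 0 < y \<and> y < \<eta> \<longrightarrow> GB mu y \<noteq> 0"
proof -
  have c: "isCont (GB mu) 0" using DERIV_isCont[OF GB_deriv[OF assms]] .
  have nz: "GB mu 0 \<noteq> 0"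
  proof
    assume "GB mu 0 = 0"
    hence "mu + 1 \<in> \<int>\<^sub>\<le>\<^sub>0" unfolding GB_zero rGamma_eq_zero_iff .
    hence "mu + 1 \<le> 0" by (rule nonpos_Ints_nonpos)
    thus False using assms by simp
  qed
  have "eventually (\<lambda>y. GB mu y \<noteq> 0) (at 0)"
    using tendsto_imp_eventually_ne[OF c[unfolded isCont_def] nz] .
  then obtain d where d: "d > 0" "\<And>y. y \<noteq> 0 \<Longrightarrow> dist y 0 < d \<Longrightarrow> GB mu y \<noteq> 0"
    unfolding eventually_at by auto
  show ?thesis using d by (intro exI[of _ d]) auto
qed

lemma FB_near0:
  assumes "mu > -1"
  shows "\<exists>\<delta>>0. \<forall>s. 0 < s \<and> s < \<delta> \<longrightarrow> FB mu s \<noteq> 0"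
proof -
  obtain \<eta> where e: "\<eta> > 0" "\<And>y. 0 < y \<Longrightarrow> y < \<eta> \<Longrightarrow> GB mu y \<noteq> 0" using GB_near0[OF assms] by blast
  show ?thesis
  proof (intro exI[of _ "2 * sqrt \<eta>"] conjI allI impI)
    show "0 < 2 * sqrt \<eta>" using e by simp
    fix s assume s: "0 < s \<and> s < 2 * sqrt \<eta>"
    have "s/2 < sqrt \<eta>" using s by simp
    hence "(s/2)^2 < (sqrt \<eta>)^2" using s by (intro power_strict_mono) auto
    hence "(s/2)^2 < \<eta>" using e by simp
    hence "GB mu ((s/2)^2) \<noteq> 0" using s by (intro e(2)) auto
    thus "FB mu s \<noteq> 0" unfolding FB_def using s by simp
  qed
qed

lemma EB_nonneg: "mu^2 \<le> 1/4 \<Longrightarrow> EB mu s \<ge> 0"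
  unfolding EB_def using qB_ge1[of mu s] by (intro add_nonneg_nonneg mult_nonneg_nonneg) auto

lemma EB_pos:
  assumes "mu^2 \<le> 1/4" "s > 0"
  shows "EB mu s > 0"
proof (rule ccontr)
  assume "\<not> EB mu s > 0"
  hence E0: "EB mu s = 0" using EB_nonneg[OF assms(1), of s] by simp
  have m: "mu > -1" using mu_gt[OF assms(1)] .
  obtain \<delta> where d: "\<delta> > 0" "\<And>t. 0 < t \<Longrightarrow> t < \<delta> \<Longrightarrow> FB mu t \<noteq> 0" using FB_near0[OF m] by blast
  define t where "t = min s (\<delta>/2)"
  have t: "0 < t" "t \<le> s" "t < \<delta>" using d assms unfolding t_def by auto
  have q: "qB mu t \<ge> 1" "qB mu s \<ge> 1" using qB_ge1[OF assms(1)] by auto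
  have "EB mu t / qB mu t \<le> EB mu s / qB mu s" using EQ_nondec[OF assms(1) t(1,2)] .
  hence "EB mu t \<le> 0" using E0 q by (simp add: divide_le_0_iff)
  hence "qB mu t * (uB mu t)^2 \<le> 0" unfolding EB_def by (smt (verit) zero_le_power2)
  hence "(uB mu t)^2 \<le> 0" using q by (simp add: mult_le_0_iff)
  hence "uB mu t = 0" by simp
  hence "FB mu t = 0" unfolding uB_def using t by simp
  thus False using d(2)[OF t(1,3)] by simp
qed

lemma PB_ne:
  assumes "mu^2 \<le> 1/4" "s > 0" "FB mu s = 0"
  shows "PB mu s \<noteq> 0"
proof
  assume P: "PB mu s = 0"
  have "uB mu s = 0" "rB mu s = 0" unfolding uB_def rB_def using assms P by auto
  hence "EB mu s = 0" unfolding EB_def by simp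
  thus False using EB_pos[OF assms(1,2)] by simp
qed

lemma FB_ev_ne:
  assumes "mu^2 \<le> 1/4" "p > 0"
  shows "eventually (\<lambda>y. FB mu y \<noteq> 0) (at p)"
proof (cases "FB mu p = 0")
  case False
  have m: "mu > -1" using mu_gt[OF assms(1)] .
  have c: "isCont (FB mu) p" using DERIV_isCont[OF FB_deriv[OF m assms(2)]] .
  show ?thesis using tendsto_imp_eventually_ne[OF c[unfolded isCont_def] False] .
next
  case True
  have m: "mu > -1" using mu_gt[OF assms(1)] .
  have nz: "PB mu p / p \<noteq> 0" using PB_ne[OF assms True] assms(2) by simp
  have "((\<lambda>y. (FB mu y - FB mu p) / (y - p)) \<longlongrightarrow> PB mu p / p) (at p)"
    using FB_deriv[OF m assms(2)] unfolding has_field_derivative_iff .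
  hence "eventually (\<lambda>y. (FB mu y - FB mu p) / (y - p) \<noteq> 0) (at p)"
    using tendsto_imp_eventually_ne nz by blast
  thus ?thesis by eventually_elim (use True in auto)
qed

lemma zeros_finite:
  assumes "mu^2 \<le> 1/4"
  shows "finite {s. 0 < s \<and> s \<le> X \<and> FB mu s = 0}"
proof (rule ccontr)
  assume inf: "infinite {s. 0 < s \<and> s \<le> X \<and> FB mu s = 0}"
  have m: "mu > -1" using mu_gt[OF assms(1)] .
  obtain \<delta> where d: "\<delta> > 0" "\<And>t. 0 < t \<Longrightarrow> t < \<delta> \<Longrightarrow> FB mu t \<noteq> 0" using FB_near0[OF m] by blast
  have sub: "{s. 0 < s \<and> s \<le> X \<and> FB mu s = 0} \<subseteq> {\<delta>..X}"
    using d by (auto simp: not_less[symmetric])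
  obtain p where p: "p \<in> {\<delta>..X}" "p islimpt {s. 0 < s \<and> s \<le> X \<and> FB mu s = 0}"
    using Heine_Borel_imp_Bolzano_Weierstrass[OF compact_Icc inf sub] by blast
  have pp: "p > 0" using p(1) d(1) by simp
  have "eventually (\<lambda>y. y \<notin> {s. 0 < s \<and> s \<le> X \<and> FB mu s = 0}) (at p)"
    using FB_ev_ne[OF assms pp] by eventually_elim auto
  thus False using p(2) unfolding islimpt_iff_eventually by simp
qed

definition WB :: "real \<Rightarrow> real \<Rightarrow> real \<Rightarrow> real" where
  "WB mu A s = rB mu s * sin (s - A) - uB mu s * cos (s - A)"

lemma WB_deriv:
  assumes "mu > -1" "s > 0"
  shows "(WB mu A has_real_derivative (1 - qB mu s) * uB mu s * sin (s - A)) (at s)"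
  unfolding WB_def[abs_def]
  by (rule derivative_eq_intros rB_deriv[OF assms] uB_deriv[OF assms] refl)+ (simp add: algebra_simps)

lemma qB_1_le: "mu^2 \<le> 1/4 \<Longrightarrow> 1 - qB mu s \<le> 0"
  using qB_ge1 by simp

lemma sturm_pos:
  assumes "mu^2 \<le> 1/4" "A > 0" "\<And>s. A \<le> s \<Longrightarrow> s \<le> A + pi \<Longrightarrow> uB mu s > 0"
  shows False
proof -
  have m: "mu > -1" using mu_gt[OF assms(1)] .
  have "WB mu A (A + pi) \<le> WB mu A A"
  proof (rule DERIV_nonpos_imp_nonincreasing[of A "A + pi" "WB mu A"])
    fix x assume x: "A \<le> x" "x \<le> A + pi"
    have "sin (x - A) \<ge> 0" using x by (intro sin_ge_zero) auto
    hence "(1 - qB mu x) * uB mu x * sin (x - A) \<le> 0"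
      using qB_1_le[OF assms(1), of x] assms(3)[OF x]
      by (intro mult_nonpos_nonneg mult_nonpos_nonneg) auto
    thus "\<exists>y. DERIV (WB mu A) x :> y \<and> y \<le> 0" using WB_deriv[OF m, of x A] x assms(2) by auto
  qed simp
  hence "uB mu (A + pi) \<le> - uB mu A" unfolding WB_def by simp
  thus False using assms(3)[of A] assms(3)[of "A + pi"] by simp
qed

lemma sturm_neg:
  assumes "mu^2 \<le> 1/4" "A > 0" "\<And>s. A \<le> s \<Longrightarrow> s \<le> A + pi \<Longrightarrow> uB mu s < 0"
  shows False
proof -
  have m: "mu > -1" using mu_gt[OF assms(1)] .
  have "WB mu A A \<le> WB mu A (A + pi)"
  proof (rule DERIV_nonneg_imp_nondecreasing[of A "A + pi" "WB mu A"])
    fix x assume x: "A \<le> x" "x \<le> A + pi"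
    have "sin (x - A) \<ge> 0" using x by (intro sin_ge_zero) auto
    moreover have "(1 - qB mu x) * uB mu x \<ge> 0"
      using qB_1_le[OF assms(1), of x] assms(3)[OF x] by (intro mult_nonpos_nonpos) auto
    ultimately have "(1 - qB mu x) * uB mu x * sin (x - A) \<ge> 0" by simp
    thus "\<exists>y. DERIV (WB mu A) x :> y \<and> y \<ge> 0" using WB_deriv[OF m, of x A] x assms(2) by auto
  qed simp
  hence "- uB mu A \<le> uB mu (A + pi)" unfolding WB_def by simp
  thus False using assms(3)[of A] assms(3)[of "A + pi"] by simp
qed

lemma zero_exists:
  assumes "mu^2 \<le> 1/4" "A > 0"
  shows "\<exists>s. A \<le> s \<and> s \<le> A + pi \<and> FB mu s = 0"
proof (rule ccontr)
  assume nz: "\<not> ?thesis"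
  have m: "mu > -1" using mu_gt[OF assms(1)] .
  have unz: "uB mu s \<noteq> 0" if "A \<le> s" "s \<le> A + pi" for s
    using nz that assms(2) unfolding uB_def by auto
  have cont: "continuous_on {a..b} (uB mu)" if "a \<ge> A" for a b
    using that assms(2) by (intro continuous_at_imp_continuous_on ballI DERIV_isCont[OF uB_deriv[OF m]]) auto
  show False
  proof (cases "uB mu A > 0")
    case True
    have "uB mu s > 0" if s: "A \<le> s" "s \<le> A + pi" for s
    proof (rule ccontr)
      assume "\<not> uB mu s > 0"
      then obtain x where "A \<le> x" "x \<le> s" "uB mu x = 0"
        using IVT2'[of "uB mu" s 0 A, OF _ _ s(1) cont[of A s]] True by auto
      thus False using unz[of x] s by auto
    qed
    thus False using sturm_pos[OF assms] by blast
  next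
    case False
    hence F: "uB mu A < 0" using unz[of A] by (simp add: pi_ge_zero)
    have "uB mu s < 0" if s: "A \<le> s" "s \<le> A + pi" for s
    proof (rule ccontr)
      assume "\<not> uB mu s < 0"
      then obtain x where "A \<le> x" "x \<le> s" "uB mu x = 0"
        using IVT'[of "uB mu" A 0 s, OF _ _ s(1) cont[of A s]] F by auto
      thus False using unz[of x] s by auto
    qed
    thus False using sturm_neg[OF assms] by blast
  qed
qed


lemma enum_exists:
  fixes Z :: "real set"
  assumes H1: "\<And>X. finite {y\<in>Z. y \<le> X}" and H2: "\<And>A. \<exists>z\<in>Z. z \<ge> A"
  shows "\<exists>x\<in>Z. card {y\<in>Z. y < x} = n"
proof (induction n)
  case 0
  obtain z where z: "z \<in> Z" using H2 by blast
  define S where "S = {y\<in>Z. y \<le> z}"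
  have fS: "finite S" "S \<noteq> {}" unfolding S_def using H1 z by auto
  define x where "x = Min S"
  have xS: "x \<in> S" unfolding x_def using fS by simp
  have e: "{y\<in>Z. y < x} = {}"
  proof (rule ccontr)
    assume "{y\<in>Z. y < x} \<noteq> {}"
    then obtain y where y: "y \<in> Z" "y < x" by auto
    hence "y \<in> S" using xS unfolding S_def by auto
    hence "x \<le> y" unfolding x_def using fS by simp
    thus False using y by simp
  qed
  have "x \<in> Z" using xS unfolding S_def by auto
  moreover have "card {y\<in>Z. y < x} = 0" unfolding e by simp
  ultimately show ?case by blast
next
  case (Suc n)
  then obtain x where x: "x \<in> Z" "card {y\<in>Z. y < x} = n" by blast
  obtain z where z: "z \<in> Z" "z \<ge> x + 1" using H2 by blast
  define S where "S = {y\<in>Z. x < y \<and> y \<le> z}"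
  have fS: "finite S" "S \<noteq> {}"
  proof -
    have "S \<subseteq> {y\<in>Z. y \<le> z}" unfolding S_def by auto
    thus "finite S" using H1 finite_subset by blast
    have "z \<in> S" using z unfolding S_def by auto
    thus "S \<noteq> {}" by blast
  qed
  define x' where "x' = Min S"
  have x'S: "x' \<in> S" unfolding x'_def using fS by simp
  have eq: "{y\<in>Z. y < x'} = insert x {y\<in>Z. y < x}"
  proof (intro set_eqI iffI)
    fix y assume y: "y \<in> {y\<in>Z. y < x'}"
    show "y \<in> insert x {y\<in>Z. y < x}"
    proof (rule ccontr)
      assume "y \<notin> insert x {y\<in>Z. y < x}"
      hence "y > x" using y by auto
      hence "y \<in> S" using y x'S unfolding S_def by auto
      hence "x' \<le> y" unfolding x'_def using fS by simp
      thus False using y by simp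
    qed
  next
    fix y assume "y \<in> insert x {y\<in>Z. y < x}"
    thus "y \<in> {y\<in>Z. y < x'}" using x x'S unfolding S_def by auto
  qed
  have fin: "finite {y\<in>Z. y < x}"
    using H1[of x] by (rule finite_subset[rotated]) auto
  have "card {y\<in>Z. y < x'} = Suc n" unfolding eq using fin x by simp
  thus ?case using x'S unfolding S_def by auto
qed

lemma enum_unique:
  fixes Z :: "real set"
  assumes H1: "\<And>X. finite {y\<in>Z. y \<le> X}"
    and "x \<in> Z" "x' \<in> Z" "card {y\<in>Z. y < x} = card {y\<in>Z. y < x'}"
  shows "x = x'"
proof (rule ccontr)
  have lem: False if "a \<in> Z" "b \<in> Z" "a < b" "card {y\<in>Z. y < a} = card {y\<in>Z. y < b}" for a b
  proof -
    have fin: "finite {y\<in>Z. y < b}" using H1[of b] by (rule finite_subset[rotated]) auto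
    have "{y\<in>Z. y < a} \<subset> {y\<in>Z. y < b}" using that by auto
    hence "card {y\<in>Z. y < a} < card {y\<in>Z. y < b}" using fin by (rule psubset_card_mono[rotated])
    thus False using that by simp
  qed
  assume "x \<noteq> x'"
  hence "x < x' \<or> x' < x" by linarith
  thus False using lem assms(2-4) by metis
qed

definition Zs :: "real \<Rightarrow> real set" where "Zs mu = {y. 0 < y \<and> bessel_J mu y = 0}"

lemma Zs_FB: "mu^2 \<le> 1/4 \<Longrightarrow> Zs mu = {y. 0 < y \<and> FB mu y = 0}"
  unfolding Zs_def using bessel_J_eq_FB[OF mu_gt] by auto

lemma Zs_H1: "mu^2 \<le> 1/4 \<Longrightarrow> finite {y\<in>Zs mu. y \<le> X}"
  using zeros_finite[of mu X] unfolding Zs_FB by (simp add: conj_commute conj_left_commute)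

lemma Zs_H2:
  assumes "mu^2 \<le> 1/4" shows "\<exists>z\<in>Zs mu. z \<ge> A"
proof -
  have "max A 1 > 0" by simp
  then obtain s where "max A 1 \<le> s" "FB mu s = 0" using zero_exists[OF assms] by blast
  thus ?thesis unfolding Zs_FB[OF assms] by (intro bexI[of _ s]) auto
qed

lemma bessel_zero_props:
  assumes "mu^2 \<le> 1/4" "n \<ge> 1"
  shows "bessel_zero mu n \<in> Zs mu" "card {y\<in>Zs mu. y < bessel_zero mu n} = n - 1"
proof -
  have set_eq: "{y. 0 < y \<and> y < x \<and> bessel_J mu y = 0} = {y\<in>Zs mu. y < x}" for x
    unfolding Zs_def by auto
  have ex1: "\<exists>!x. 0 < x \<and> bessel_J mu x = 0 \<and> card {y. 0 < y \<and> y < x \<and> bessel_J mu y = 0} = n - 1"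
  proof -
    obtain x where x: "x \<in> Zs mu" "card {y\<in>Zs mu. y < x} = n - 1"
      using enum_exists[OF Zs_H1[OF assms(1)] Zs_H2[OF assms(1)]] by blast
    show ?thesis
    proof (rule ex1I[of _ x])
      show "0 < x \<and> bessel_J mu x = 0 \<and> card {y. 0 < y \<and> y < x \<and> bessel_J mu y = 0} = n - 1"
        using x unfolding set_eq unfolding Zs_def by auto
    next
      fix x' assume "0 < x' \<and> bessel_J mu x' = 0 \<and> card {y. 0 < y \<and> y < x' \<and> bessel_J mu y = 0} = n - 1"
      hence "x' \<in> Zs mu" "card {y\<in>Zs mu. y < x'} = n - 1" unfolding set_eq unfolding Zs_def by auto
      thus "x' = x" using enum_unique[OF Zs_H1[OF assms(1)]] x by metis
    qed
  qed
  have "0 < bessel_zero mu n \<and> bessel_J mu (bessel_zero mu n) = 0 \<and>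
      card {y. 0 < y \<and> y < bessel_zero mu n \<and> bessel_J mu y = 0} = n - 1"
    unfolding bessel_zero_def by (rule theI'[OF ex1])
  thus "bessel_zero mu n \<in> Zs mu" "card {y\<in>Zs mu. y < bessel_zero mu n} = n - 1"
    unfolding set_eq unfolding Zs_def by auto
qed

lemma bessel_zero_basic:
  assumes "mu^2 \<le> 1/4" "n \<ge> 1"
  shows "bessel_zero mu n > 0" "FB mu (bessel_zero mu n) = 0" "PB mu (bessel_zero mu n) \<noteq> 0"
proof -
  have "bessel_zero mu n \<in> {y. 0 < y \<and> FB mu y = 0}"
    using bessel_zero_props(1)[OF assms] unfolding Zs_FB[OF assms(1)] .
  thus j: "bessel_zero mu n > 0" "FB mu (bessel_zero mu n) = 0" by auto
  show "PB mu (bessel_zero mu n) \<noteq> 0" using PB_ne[OF assms(1) j] .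
qed

lemma deriv_bessel:
  assumes "mu^2 \<le> 1/4" "s > 0"
  shows "deriv (bessel_J mu) s = PB mu s / s"
proof -
  have "(bessel_J mu has_real_derivative PB mu s / s) (at s)"
    by (rule has_field_derivative_transform_within_open[OF FB_deriv[OF mu_gt[OF assms(1)] assms(2)], of "{0<..}"])
       (use assms bessel_J_eq_FB[OF mu_gt[OF assms(1)]] in auto)
  thus ?thesis by (rule DERIV_imp_deriv)
qed

lemma bessel_zero_finite:
  assumes "mu^2 \<le> 1/4"
  shows "finite {n. 1 \<le> n \<and> bessel_zero mu n < C}"
proof -
  let ?N = "{n. 1 \<le> n \<and> bessel_zero mu n < C}"
  have inj: "inj_on (bessel_zero mu) ?N"
  proof (rule inj_onI)
    fix n n' assume n: "n \<in> ?N" "n' \<in> ?N" and e: "bessel_zero mu n = bessel_zero mu n'"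
    have "n - 1 = n' - 1" using bessel_zero_props(2)[OF assms, of n] bessel_zero_props(2)[OF assms, of n'] n e by simp
    thus "n = n'" using n by simp arith
  qed
  have "bessel_zero mu ` ?N \<subseteq> {y\<in>Zs mu. y \<le> C}"
    using bessel_zero_props(1)[OF assms] by auto
  hence "finite (bessel_zero mu ` ?N)" using Zs_H1[OF assms] finite_subset by blast
  thus ?thesis using finite_imageD inj by blast
qed


lemma energy_bound:
  fixes w v :: "real \<Rightarrow> real" and al lam a b :: real
  assumes al: "0 \<le> al" and lam: "lam > 0" and ab: "0 < a" "a < b" "b \<le> 1"
    and dw: "\<And>x. x > 0 \<Longrightarrow> (w has_real_derivative v x / x powr al) (at x)"
    and dv: "\<And>x. x > 0 \<Longrightarrow> (v has_real_derivative - lam * w x) (at x)"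
    and w1: "w 1 = 0"
  shows "2 * lam * integral {a..b} (\<lambda>x. (w x)^2) \<ge> (v 1)^2 * (b - a) - (v 1)^2 / sqrt (lam * a powr al)"
proof -
  define K where "K = (v 1)^2"
  define E1 where "E1 = (\<lambda>x. (v x)^2 / x powr al + lam * (w x)^2)"
  define E2 where "E2 = (\<lambda>x. (v x)^2 + lam * x powr al * (w x)^2)"
  have dp: "((\<lambda>x. x powr al) has_real_derivative al * x powr (al - 1)) (at x)" if "x > 0" for x
    using has_real_derivative_powr[OF that] .
  have dE1: "(E1 has_real_derivative - (al * x powr (al - 1)) * (v x)^2 / (x powr al)^2) (at x)" if x: "x > 0" for x
  proof -
    have pnz: "x powr al \<noteq> 0" using x by simp
    show ?thesis unfolding E1_def
      apply (rule DERIV_cong[OF DERIV_add[OF DERIV_divide[OF DERIV_power[OF dv[OF x], of 2] dp[OF x]]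
             DERIV_cmult[OF DERIV_power[OF dw[OF x], of 2]]]])
      using pnz apply simp
      using pnz by (simp add: field_simps power2_eq_square)
  qed
  have dE2: "(E2 has_real_derivative lam * (al * x powr (al - 1)) * (w x)^2) (at x)" if x: "x > 0" for x
  proof -
    have pnz: "x powr al \<noteq> 0" using x by simp
    show ?thesis unfolding E2_def
      apply (rule DERIV_cong[OF DERIV_add[OF DERIV_power[OF dv[OF x], of 2]
             DERIV_mult[OF DERIV_cmult[OF dp[OF x], of lam] DERIV_power[OF dw[OF x], of 2]]]])
      using pnz by (simp add: field_simps power2_eq_square)
  qed
  have E1ge: "E1 x \<ge> K" if x: "0 < x" "x \<le> 1" for x
  proof -
    have "E1 1 \<le> E1 x"
    proof (rule DERIV_nonpos_imp_nonincreasing[of x 1 E1])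
      fix y assume y: "x \<le> y" "y \<le> 1"
      hence yp: "y > 0" using x by simp
      have "- (al * y powr (al - 1)) * (v y)^2 / (y powr al)^2 \<le> 0"
        using al yp by (intro divide_nonpos_nonneg mult_nonpos_nonneg) auto
      thus "\<exists>d. DERIV E1 y :> d \<and> d \<le> 0" using dE1[OF yp] by blast
    qed (use x in auto)
    thus ?thesis unfolding E1_def K_def using w1 by simp
  qed
  have E2le: "E2 x \<le> K" if x: "0 < x" "x \<le> 1" for x
  proof -
    have "E2 x \<le> E2 1"
    proof (rule DERIV_nonneg_imp_nondecreasing[of x 1 E2])
      fix y assume y: "x \<le> y" "y \<le> 1"
      hence yp: "y > 0" using x by simp
      have "lam * (al * y powr (al - 1)) * (w y)^2 \<ge> 0"
        using al yp lam by (intro mult_nonneg_nonneg) auto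
      thus "\<exists>d. DERIV E2 y :> d \<and> d \<ge> 0" using dE2[OF yp] by blast
    qed (use x in auto)
    thus ?thesis unfolding E2_def K_def using w1 by simp
  qed
  define ra where "ra = sqrt (lam * a powr al)"
  have ra: "ra > 0" unfolding ra_def using lam ab by simp
  have wv: "\<bar>w x * v x\<bar> \<le> K / (2 * ra)" if x: "a \<le> x" "x \<le> b" for x
  proof -
    have xp: "x > 0" "x \<le> 1" using x ab by auto
    define r where "r = sqrt (lam * x powr al)"
    have r2: "r^2 = lam * x powr al" unfolding r_def using lam xp by simp
    have rra: "ra \<le> r" unfolding r_def ra_def
      using lam ab x al by (intro real_sqrt_le_mono mult_left_mono powr_mono2) auto
    have "0 \<le> (\<bar>v x\<bar> - r * \<bar>w x\<bar>)^2" by simp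
    hence "2 * r * \<bar>w x * v x\<bar> \<le> (v x)^2 + r^2 * (w x)^2"
      by (simp add: power2_eq_square algebra_simps abs_mult)
    also have "\<dots> = E2 x" unfolding E2_def r2 by simp
    also have "\<dots> \<le> K" using E2le[OF xp] .
    finally have A: "2 * r * \<bar>w x * v x\<bar> \<le> K" .
    have "2 * ra * \<bar>w x * v x\<bar> \<le> 2 * r * \<bar>w x * v x\<bar>" using rra by (intro mult_right_mono) auto
    hence "2 * ra * \<bar>w x * v x\<bar> \<le> K" using A by linarith
    thus ?thesis using ra by (simp add: field_simps)
  qed
  have cw: "continuous_on {a..b} w" "continuous_on {a..b} v"
    using ab by (auto intro!: continuous_at_imp_continuous_on DERIV_isCont[OF dw] DERIV_isCont[OF dv])
  have cE1: "continuous_on {a..b} E1"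
    using ab by (auto intro!: continuous_at_imp_continuous_on DERIV_isCont[OF dE1])
  have FTC: "((\<lambda>x. (v x)^2 / x powr al - lam * (w x)^2) has_integral (w b * v b - w a * v a)) {a..b}"
  proof (rule fundamental_theorem_of_calculus[of a b "\<lambda>x. w x * v x"])
    show "a \<le> b" using ab by simp
    fix x assume x: "x \<in> {a..b}"
    hence xp: "x > 0" using ab by auto
    have "((\<lambda>x. w x * v x) has_real_derivative (v x)^2 / x powr al - lam * (w x)^2) (at x)"
      by (rule DERIV_cong[OF DERIV_mult[OF dw[OF xp] dv[OF xp]]]) (simp add: power2_eq_square algebra_simps)
    thus "((\<lambda>x. w x * v x) has_vector_derivative (v x)^2 / x powr al - lam * (w x)^2) (at x within {a..b})"
      by (simp add: has_real_derivative_iff_has_vector_derivative[symmetric] has_field_derivative_at_within)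
  qed
  have I1: "(E1 has_integral integral {a..b} E1) {a..b}"
    using integrable_continuous_interval[OF cE1] by (simp add: has_integral_integral)
  have I1ge: "integral {a..b} E1 \<ge> K * (b - a)"
  proof -
    have "((\<lambda>x. K) has_integral K * (b - a)) {a..b}" using has_integral_const_real[of K a b] ab by (simp add: mult.commute)
    thus ?thesis using has_integral_le[OF _ I1, of "\<lambda>x. K"] E1ge ab by auto
  qed
  have "((\<lambda>x. (E1 x - ((v x)^2 / x powr al - lam * (w x)^2)) / 2) has_integral
      (integral {a..b} E1 - (w b * v b - w a * v a)) / 2) {a..b}"
    using has_integral_divide[OF has_integral_diff[OF I1 FTC], of 2] by simp
  moreover have "(\<lambda>x. (E1 x - ((v x)^2 / x powr al - lam * (w x)^2)) / 2) = (\<lambda>x. lam * (w x)^2)"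
    unfolding E1_def by auto
  ultimately have "((\<lambda>x. lam * (w x)^2) has_integral (integral {a..b} E1 - (w b * v b - w a * v a)) / 2) {a..b}"
    by simp
  hence "integral {a..b} (\<lambda>x. lam * (w x)^2) = (integral {a..b} E1 - (w b * v b - w a * v a)) / 2"
    by (rule integral_unique)
  moreover have "integral {a..b} (\<lambda>x. lam * (w x)^2) = lam * integral {a..b} (\<lambda>x. (w x)^2)"
    by simp
  ultimately have eq: "2 * lam * integral {a..b} (\<lambda>x. (w x)^2) = integral {a..b} E1 - (w b * v b - w a * v a)"
    by simp
  have "w b * v b - w a * v a \<le> K / ra"
    using wv[of a] wv[of b] ab by (simp add: abs_le_iff)
  hence "2 * lam * integral {a..b} (\<lambda>x. (w x)^2) \<ge> K * (b - a) - K / ra" using eq I1ge by linarith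
  thus ?thesis unfolding K_def ra_def by simp
qed


definition wG :: "real \<Rightarrow> real \<Rightarrow> real \<Rightarrow> real \<Rightarrow> real \<Rightarrow> real" where
  "wG be ka mu j x = x powr be * FB mu (j * x powr ka)"
definition vG :: "real \<Rightarrow> real \<Rightarrow> real \<Rightarrow> real \<Rightarrow> real \<Rightarrow> real" where
  "vG be ka mu j x = x powr (- be) * (be * FB mu (j * x powr ka) + ka * PB mu (j * x powr ka))"

lemma algw:
  fixes x B K j F P be ka :: real
  assumes "x > 0" "B > 0" "K > 0" "j > 0"
  shows "be * (B / x) * F + P / (j * K) * (j * (ka * (K / x))) * B = ((1 / B) * (be * F + ka * P)) / (x / (B * B))"
  using assms by (simp add: field_simps)

lemma algv:
  fixes x B K j F P be ka mu :: real
  assumes "x > 0" "B > 0" "K > 0" "j > 0" "K * K = x * B * B" "(ka * mu)^2 = be^2"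
  shows "(- be) * (1 / (B * x)) * (be * F + ka * P)
     + (be * (P / (j * K) * (j * (ka * (K / x)))) + ka * ((mu^2 / (j * K) - j * K) * F * (j * (ka * (K / x))))) * (1 / B)
     = - ((ka * j)^2) * (B * F)"
proof -
  have m: "ka^2 * mu^2 = be^2" using assms(6) by (simp add: power_mult_distrib)
  have "(- be) * (1 / (B * x)) * (be * F + ka * P)
     + (be * (P / (j * K) * (j * (ka * (K / x)))) + ka * ((mu^2 / (j * K) - j * K) * F * (j * (ka * (K / x))))) * (1 / B)
     = F * (ka^2 * mu^2 - be^2) / (B * x) - ka^2 * j^2 * (K * K) * F / (B * x)"
    using assms(1-4) by (simp add: field_simps power2_eq_square)
  also have "\<dots> = - (ka^2) * j^2 * (x * B * B) * F / (B * x)" unfolding m assms(5) by simp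
  also have "\<dots> = - ((ka * j)^2) * (B * F)" using assms(1-4) by (simp add: field_simps power2_eq_square)
  finally show ?thesis .
qed

lemma wG_derivs:
  assumes mu: "mu^2 \<le> 1/4" and x: "x > 0" and j: "j > 0"
    and ka: "ka = be + 1/2" and al: "al = 1 - 2 * be" and km: "(ka * mu)^2 = be^2"
  shows "(wG be ka mu j has_real_derivative vG be ka mu j x / x powr al) (at x)"
    and "(vG be ka mu j has_real_derivative - ((ka * j)^2) * wG be ka mu j x) (at x)"
proof -
  have m: "mu > -1" using mu_gt[OF mu] .
  define B where "B = x powr be"
  define K where "K = x powr ka"
  define s where "s = j * K"
  have B: "B > 0" and K: "K > 0" and s: "s > 0" using x j unfolding B_def K_def s_def by auto
  have i1: "x powr (be - 1) = B / x" unfolding B_def using x by (simp add: powr_diff)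
  have i2: "x powr (ka - 1) = K / x" unfolding K_def using x by (simp add: powr_diff)
  have i3: "x powr (- be) = 1 / B" unfolding B_def using x by (simp add: powr_minus_divide)
  have i4: "x powr (- be - 1) = 1 / (B * x)" unfolding B_def using x by (simp add: powr_diff powr_minus_divide)
  have i5: "x powr al = x / (B * B)" unfolding B_def al using x by (simp add: powr_diff powr_add[symmetric])
  have i6: "K * K = x * B * B"
  proof -
    have "K * K = x powr (ka + ka)" unfolding K_def by (simp only: powr_add)
    also have "ka + ka = be + be + 1" unfolding ka by simp
    also have "x powr (be + be + 1) = B * B * x powr 1" unfolding B_def by (simp only: powr_add)
    finally show ?thesis using x by simp
  qed
  have s': "j * x powr ka > 0" using s unfolding s_def K_def .
  have dK: "((\<lambda>x. j * x powr ka) has_real_derivative j * (ka * x powr (ka - 1))) (at x)"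
    using DERIV_cmult[OF has_real_derivative_powr[OF x, of ka], of j] .
  have dF: "((\<lambda>x. FB mu (j * x powr ka)) has_real_derivative PB mu s / s * (j * (ka * x powr (ka - 1)))) (at x)"
    using DERIV_chain2[OF FB_deriv[OF m s'] dK] unfolding s_def K_def .
  have dP: "((\<lambda>x. PB mu (j * x powr ka)) has_real_derivative (mu^2 / s - s) * FB mu s * (j * (ka * x powr (ka - 1)))) (at x)"
    using DERIV_chain2[OF PB_deriv[OF m s'] dK] unfolding s_def K_def .
  show "(wG be ka mu j has_real_derivative vG be ka mu j x / x powr al) (at x)"
    unfolding wG_def[abs_def]
    apply (rule DERIV_cong[OF DERIV_mult[OF has_real_derivative_powr[OF x, of be] dF]])
    unfolding vG_def i1 i2 i3 i5 B_def[symmetric] K_def[symmetric] s_def[symmetric]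
    using algw[OF x B K j, of be "FB mu s" "PB mu s" ka] unfolding s_def by (simp add: algebra_simps)
  show "(vG be ka mu j has_real_derivative - ((ka * j)^2) * wG be ka mu j x) (at x)"
    unfolding vG_def[abs_def]
    apply (rule DERIV_cong[OF DERIV_mult[OF has_real_derivative_powr[OF x, of "- be"]
            DERIV_add[OF DERIV_cmult[OF dF, of be] DERIV_cmult[OF dP, of ka]]]])
    unfolding wG_def i2 i3 i4 B_def[symmetric] K_def[symmetric] s_def[symmetric]
    using algv[OF x B K j i6 km, of "FB mu s" "PB mu s"] unfolding s_def by (simp add: algebra_simps)
qed


lemma phi_bound:
  fixes al a b mu :: real and n :: nat
  assumes al: "0 \<le> al" "al < 1" and ab: "0 < a" "a < b" "b < 1"
    and mu: "mu^2 \<le> 1/4" and km: "(((2 - al)/2) * mu)^2 = ((1 - al)/2)^2" and n: "n \<ge> 1"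
  defines "j \<equiv> bessel_zero mu n"
  defines "C \<equiv> sqrt ((2 - al)/2) / \<bar>deriv (bessel_J mu) j\<bar>"
  defines "f \<equiv> (\<lambda>x. (C * wG ((1 - al)/2) ((2 - al)/2) mu j x)^2)"
  shows "integral {a..b} f \<ge> ((2 - al)/2) / 2 * ((b - a) - 1 / (((2 - al)/2) * j * sqrt (a powr al)))"
    and "integral {a..b} f > 0"
proof -
  define be where "be = (1 - al)/2"
  define ka where "ka = (2 - al)/2"
  define w where "w = wG be ka mu j"
  define v where "v = vG be ka mu j"
  define P where "P = PB mu j"
  have j: "j > 0" "FB mu j = 0" "P \<noteq> 0" unfolding j_def P_def using bessel_zero_basic[OF mu n] by auto
  have kap: "ka > 0" unfolding ka_def using al by simp
  have D: "deriv (bessel_J mu) j = P / j" unfolding P_def using deriv_bessel[OF mu j(1)] .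
  have C2: "C^2 = ka * j^2 / P^2" unfolding C_def D ka_def[symmetric] using kap j
    by (simp add: power_divide abs_divide power2_abs power_mult_distrib)
  have fw: "f = (\<lambda>x. C^2 * (w x)^2)" unfolding f_def w_def be_def ka_def by (simp add: power_mult_distrib)
  have kb: "ka = be + 1/2" and alb: "al = 1 - 2 * be" and km': "(ka * mu)^2 = be^2"
    using km unfolding ka_def be_def by (simp_all add: field_simps)
  have dw: "(w has_real_derivative v x / x powr al) (at x)" if "x > 0" for x
    unfolding w_def v_def using wG_derivs(1)[OF mu that j(1) kb alb km'] .
  have dv: "(v has_real_derivative - ((ka * j)^2) * w x) (at x)" if "x > 0" for x
    unfolding w_def v_def using wG_derivs(2)[OF mu that j(1) kb alb km'] .
  have w1: "w 1 = 0" unfolding w_def wG_def using j by simp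
  have v1: "v 1 = ka * P" unfolding v_def vG_def P_def using j by simp
  have lam: "(ka * j)^2 > 0" using kap j by simp
  have EB: "2 * (ka * j)^2 * integral {a..b} (\<lambda>x. (w x)^2) \<ge> (v 1)^2 * (b - a) - (v 1)^2 / sqrt ((ka * j)^2 * a powr al)"
    using energy_bound[of al "(ka * j)^2" a b w v, OF al(1) lam ab(1,2) _ dw _ w1] ab dv
    by (simp add: algebra_simps)
  have sq: "sqrt ((ka * j)^2 * a powr al) = ka * j * sqrt (a powr al)"
    using kap j by (simp add: real_sqrt_mult)
  have intf: "integral {a..b} f = C^2 * integral {a..b} (\<lambda>x. (w x)^2)" unfolding fw by simp
  define R where "R = (b - a) - 1 / (ka * j * sqrt (a powr al))"
  have "2 * (ka * j)^2 * integral {a..b} (\<lambda>x. (w x)^2) \<ge> (ka * P)^2 * R"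
    using EB unfolding v1 sq R_def by (simp add: algebra_simps)
  moreover have l2: "2 * (ka * j)^2 > 0" using lam by simp
  ultimately have "(ka * P)^2 * R \<le> integral {a..b} (\<lambda>x. (w x)^2) * (2 * (ka * j)^2)"
    by (simp add: algebra_simps)
  hence "integral {a..b} (\<lambda>x. (w x)^2) \<ge> (ka * P)^2 * R / (2 * (ka * j)^2)"
    by (rule pos_divide_le_eq[OF l2, THEN iffD2])
  hence "C^2 * integral {a..b} (\<lambda>x. (w x)^2) \<ge> C^2 * ((ka * P)^2 * R / (2 * (ka * j)^2))"
    by (intro mult_left_mono) auto
  also have "C^2 * ((ka * P)^2 * R / (2 * (ka * j)^2)) = ka / 2 * R"
    unfolding C2 using kap j by (simp add: field_simps power2_eq_square)
  finally show "integral {a..b} f \<ge> ((2 - al)/2) / 2 * ((b - a) - 1 / (((2 - al)/2) * j * sqrt (a powr al)))"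
    unfolding intf R_def ka_def by simp
  have cw: "continuous_on {a..b} (\<lambda>x. (w x)^2)"
  proof -
    have "continuous_on {a..b} w"
      using ab by (intro continuous_at_imp_continuous_on ballI DERIV_isCont[OF dw]) auto
    thus ?thesis by (rule continuous_on_power)
  qed
  have nn: "integral {a..b} (\<lambda>x. (w x)^2) \<ge> 0"
    by (rule integral_nonneg[OF integrable_continuous_interval[OF cw]]) auto
  have "integral {a..b} (\<lambda>x. (w x)^2) \<noteq> 0"
  proof
    assume "integral {a..b} (\<lambda>x. (w x)^2) = 0"
    hence z: "\<forall>x\<in>{a..b}. (w x)^2 = 0" using integral_eq_0_iff[OF cw ab(2)] by simp
    define g where "g = (\<lambda>x. j * x powr ka)"
    have inj: "inj_on g {a..b}"
    proof (rule inj_onI)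
      fix x y assume xy: "x \<in> {a..b}" "y \<in> {a..b}" "g x = g y"
      show "x = y"
      proof (rule ccontr)
        assume "x \<noteq> y"
        hence "x < y \<or> y < x" by linarith
        hence "g x < g y \<or> g y < g x" unfolding g_def using xy ab kap j
          by (auto intro!: mult_strict_left_mono powr_less_mono2)
        thus False using xy by simp
      qed
    qed
    have "g ` {a..b} \<subseteq> {s. 0 < s \<and> s \<le> j * b powr ka \<and> FB mu s = 0}"
    proof
      fix s assume "s \<in> g ` {a..b}"
      then obtain x where x: "x \<in> {a..b}" "s = g x" by auto
      have xp: "x > 0" using x ab by simp
      have "w x = 0" using z x by simp
      hence "FB mu (g x) = 0" unfolding w_def wG_def g_def using xp by simp
      moreover have "g x \<le> j * b powr ka" unfolding g_def using x j kap xp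
        by (intro mult_left_mono powr_mono2) auto
      moreover have "g x > 0" unfolding g_def using j xp by simp
      ultimately show "s \<in> {s. 0 < s \<and> s \<le> j * b powr ka \<and> FB mu s = 0}" using x by simp
    qed
    hence "finite (g ` {a..b})" using zeros_finite[OF mu] finite_subset by blast
    hence "finite {a..b}" using finite_imageD inj by blast
    thus False using infinite_Icc[OF ab(2)] by simp
  qed
  hence "integral {a..b} (\<lambda>x. (w x)^2) > 0" using nn by simp
  moreover have "C^2 > 0" unfolding C2 using kap j by simp
  ultimately show "integral {a..b} f > 0" unfolding intf by simp
qed


lemma per_mu:
  fixes al a b mu :: real and n :: nat
  assumes al: "0 \<le> al" "al < 1" and ab: "0 < a" "a < b" "b < 1"
    and mu: "mu^2 \<le> 1/4" and km: "(((2 - al)/2) * mu)^2 = ((1 - al)/2)^2" and n: "n \<ge> 1"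
  shows "integral {a..b} (\<lambda>x. (sqrt ((2 - al)/2) / \<bar>deriv (bessel_J mu) (bessel_zero mu n)\<bar>
             * wG ((1 - al)/2) ((2 - al)/2) mu (bessel_zero mu n) x)^2) > 0"
    and "bessel_zero mu n \<ge> 2 / (((2 - al)/2) * (b - a) * sqrt (a powr al)) \<Longrightarrow>
         integral {a..b} (\<lambda>x. (sqrt ((2 - al)/2) / \<bar>deriv (bessel_J mu) (bessel_zero mu n)\<bar>
             * wG ((1 - al)/2) ((2 - al)/2) mu (bessel_zero mu n) x)^2) \<ge> ((2 - al)/2) * (b - a) / 4"
proof -
  note pb = phi_bound[OF al ab mu km n]
  show "integral {a..b} (\<lambda>x. (sqrt ((2 - al)/2) / \<bar>deriv (bessel_J mu) (bessel_zero mu n)\<bar>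
             * wG ((1 - al)/2) ((2 - al)/2) mu (bessel_zero mu n) x)^2) > 0" using pb(2) .
  assume J: "bessel_zero mu n \<ge> 2 / (((2 - al)/2) * (b - a) * sqrt (a powr al))"
  define ka where "ka = (2 - al)/2"
  define j where "j = bessel_zero mu n"
  define sA where "sA = sqrt (a powr al)"
  have kap: "ka > 0" unfolding ka_def using al by simp
  have sA: "sA > 0" unfolding sA_def using ab by simp
  have jp: "j > 0" unfolding j_def using bessel_zero_basic(1)[OF mu n] .
  have "j \<ge> 2 / (ka * (b - a) * sA)" using J unfolding j_def ka_def sA_def .
  hence "j * (ka * (b - a) * sA) \<ge> 2" using kap sA ab by (simp add: field_simps)
  hence "1 / (ka * j * sA) \<le> (b - a) / 2" using kap sA ab jp by (simp add: field_simps)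
  hence A: "ka / 2 * ((b - a) - 1 / (ka * j * sA)) \<ge> ka / 2 * ((b - a) / 2)"
    using kap by (intro mult_left_mono) auto
  have B: "ka / 2 * ((b - a) / 2) = ka * (b - a) / 4" by simp
  have L: "integral {a..b} (\<lambda>x. (sqrt ka / \<bar>deriv (bessel_J mu) j\<bar>
             * wG ((1 - al)/2) ka mu j x)^2) \<ge> ka / 2 * ((b - a) - 1 / (ka * j * sA))"
    using pb(1) unfolding ka_def[symmetric] j_def[symmetric] sA_def[symmetric] .
  have "integral {a..b} (\<lambda>x. (sqrt ka / \<bar>deriv (bessel_J mu) j\<bar>
             * wG ((1 - al)/2) ka mu j x)^2) \<ge> ka * (b - a) / 4" using A B L by linarith
  thus "integral {a..b} (\<lambda>x. (sqrt ((2 - al)/2) / \<bar>deriv (bessel_J mu) (bessel_zero mu n)\<bar>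
             * wG ((1 - al)/2) ((2 - al)/2) mu (bessel_zero mu n) x)^2) \<ge> ((2 - al)/2) * (b - a) / 4"
    unfolding ka_def[symmetric] j_def[symmetric] .
qed

theorem lemma7p2:
  fixes \<alpha> a b :: real
  assumes "0 \<le> \<alpha>" "\<alpha> < 1" "0 < a" "a < b" "b < 1"
  shows "\<exists>\<mu>>0. \<forall>m::nat. m \<ge> 1 \<longrightarrow> integral {a..b} (\<lambda>x. (Phi_tilde \<alpha> m x)\<^sup>2) \<ge> \<mu>"
proof -
  define nu where "nu = nu_alpha \<alpha>"
  define ka where "ka = (2 - \<alpha>)/2"
  define be where "be = (1 - \<alpha>)/2"
  define Jst where "Jst = 2 / (ka * (b - a) * sqrt (a powr \<alpha>))"
  define I where "I = (\<lambda>m. integral {a..b} (\<lambda>x. (Phi_tilde \<alpha> m x)\<^sup>2))"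
  have kap: "ka > 0" unfolding ka_def using assms by simp
  have nu0: "nu \<ge> 0" "nu \<le> 1/2" unfolding nu_def nu_alpha_def using assms by (auto simp: field_simps)
  have mu1: "nu^2 \<le> 1/4" "(-nu)^2 \<le> 1/4"
  proof -
    have "nu * nu \<le> (1/2) * (1/2)" using nu0 by (intro mult_mono) auto
    thus "nu^2 \<le> 1/4" "(-nu)^2 \<le> 1/4" by (simp_all add: power2_eq_square)
  qed
  have kn: "ka * nu = be" unfolding ka_def nu_def nu_alpha_def be_def using assms by (simp add: field_simps)
  have km: "(((2 - \<alpha>)/2) * nu)^2 = ((1 - \<alpha>)/2)^2" "(((2 - \<alpha>)/2) * (-nu))^2 = ((1 - \<alpha>)/2)^2"
    using kn unfolding ka_def be_def by (simp_all add: power2_eq_square)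
  note pm1 = per_mu[OF assms mu1(1) km(1)] and pm2 = per_mu[OF assms mu1(2) km(2)]
  define C where "C = (\<lambda>mu n x. (sqrt ((2 - \<alpha>)/2) / \<bar>deriv (bessel_J mu) (bessel_zero mu n)\<bar>
             * wG ((1 - \<alpha>)/2) ((2 - \<alpha>)/2) mu (bessel_zero mu n) x)^2)"
  have Ieq_odd: "I m = integral {a..b} (C (-nu) ((m+1) div 2))" if m: "odd m" for m
    unfolding I_def
  proof (rule integral_cong)
    fix x assume x: "x \<in> {a..b}"
    hence xp: "x > 0" using assms by simp
    define n where "n = (m+1) div 2"
    have n: "n \<ge> 1" unfolding n_def using m by presburger
    have jp: "bessel_zero (-nu) n > 0" using bessel_zero_basic(1)[OF mu1(2) n] .
    have arg: "bessel_zero (-nu) n * x powr ((2 - \<alpha>)/2) > 0" using jp xp by simp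
    have e: "bessel_J (-nu) (bessel_zero (-nu) n * x powr ((2 - \<alpha>)/2))
           = FB (-nu) (bessel_zero (-nu) n * x powr ((2 - \<alpha>)/2))"
      using bessel_J_eq_FB[OF mu_gt[OF mu1(2)] arg] .
    have p1: "Phi_tilde \<alpha> m x = sqrt ((2 - \<alpha>)/2) / \<bar>deriv (bessel_J (-nu)) (bessel_zero (-nu) n)\<bar> * Phi_e \<alpha> n x"
      unfolding n_def using m by (simp add: Phi_tilde_def Let_def kappa_alpha_def nu_def[symmetric])
    have p2: "Phi_e \<alpha> n x = x powr ((1 - \<alpha>)/2) * FB (-nu) (bessel_zero (-nu) n * x powr ((2 - \<alpha>)/2))"
      using xp by (simp add: Phi_e_def kappa_alpha_def nu_def[symmetric] e)
    show "(Phi_tilde \<alpha> m x)\<^sup>2 = C (-nu) ((m+1) div 2) x"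
      unfolding C_def n_def[symmetric] p1 p2 wG_def by simp
  qed
  have Ieq_even: "I m = integral {a..b} (C nu (m div 2))" if m: "even m" "m \<ge> 1" for m
    unfolding I_def
  proof (rule integral_cong)
    fix x assume x: "x \<in> {a..b}"
    hence xp: "x > 0" using assms by simp
    have e: "bessel_J nu (bessel_zero nu (m div 2) * x powr ((2 - \<alpha>)/2))
           = FB nu (bessel_zero nu (m div 2) * x powr ((2 - \<alpha>)/2))"
      if "m \<ge> 2"
    proof -
      have n: "m div 2 \<ge> 1" using that by simp
      have jp: "bessel_zero nu (m div 2) > 0" using bessel_zero_basic(1)[OF mu1(1) n] .
      have arg: "bessel_zero nu (m div 2) * x powr ((2 - \<alpha>)/2) > 0" using jp xp by simp
      show ?thesis using bessel_J_eq_FB[OF mu_gt[OF mu1(1)] arg] .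
    qed
    show "(Phi_tilde \<alpha> m x)\<^sup>2 = C nu (m div 2) x"
    proof (cases "m \<ge> 2")
      case True
      show ?thesis unfolding C_def using m xp
        by (simp add: Phi_tilde_def Phi_o_def Let_def kappa_alpha_def nu_def[symmetric] e[OF True] wG_def)
    next
      case False
      thus ?thesis using m by presburger
    qed
  qed
  define Jst where "Jst = 2 / (((2 - \<alpha>)/2) * (b - a) * sqrt (a powr \<alpha>))"
  define B where "B = ((2 - \<alpha>)/2) * (b - a) / 4"
  have Bp: "B > 0" unfolding B_def using assms by simp
  have f1: "finite {n. 1 \<le> n \<and> bessel_zero (-nu) n < Jst}" by (rule bessel_zero_finite[OF mu1(2)])
  have f2: "finite {n. 1 \<le> n \<and> bessel_zero nu n < Jst}" by (rule bessel_zero_finite[OF mu1(1)])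
  obtain k1 where k1: "\<forall>n \<in> {n. 1 \<le> n \<and> bessel_zero (-nu) n < Jst}. n \<le> k1"
    using f1[unfolded finite_nat_set_iff_bounded_le] by (elim exE)
  obtain k2 where k2: "\<forall>n \<in> {n. 1 \<le> n \<and> bessel_zero nu n < Jst}. n \<le> k2"
    using f2[unfolded finite_nat_set_iff_bounded_le] by (elim exE)
  define k where "k = max k1 k2"
  have pos: "I m > 0" if "m \<ge> 1" for m
  proof (cases "odd m")
    case True
    have n: "(m+1) div 2 \<ge> 1" using True by presburger
    show ?thesis unfolding Ieq_odd[OF True] C_def using pm2(1)[OF n] .
  next
    case False
    have ev: "even m" using False by simp
    have n: "m div 2 \<ge> 1" using ev that by presburger
    show ?thesis unfolding Ieq_even[OF ev that] C_def using pm1(1)[OF n] .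
  qed
  have big: "I m \<ge> B" if "m > 2 * k + 2" for m
  proof (cases "odd m")
    case True
    have n: "(m+1) div 2 \<ge> 1" using True by presburger
    have "(m+1) div 2 > k1" using that unfolding k_def by simp
    hence "\<not> bessel_zero (-nu) ((m+1) div 2) < Jst"
    proof (intro notI)
      assume "bessel_zero (-nu) ((m+1) div 2) < Jst"
      hence "(m+1) div 2 \<in> {n. 1 \<le> n \<and> bessel_zero (-nu) n < Jst}" using n by simp
      hence "(m+1) div 2 \<le> k1" using k1 by (rule bspec[rotated])
      thus False using \<open>(m+1) div 2 > k1\<close> by simp
    qed
    hence J: "bessel_zero (-nu) ((m+1) div 2) \<ge> Jst" by simp
    show ?thesis unfolding Ieq_odd[OF True] C_def B_def using pm2(2)[OF n J[unfolded Jst_def]] .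
  next
    case False
    have m1: "m \<ge> 1" using that by simp
    have ev: "even m" using False by simp
    have n: "m div 2 \<ge> 1" using ev that by presburger
    have "m div 2 > k2" using that unfolding k_def by simp
    hence "\<not> bessel_zero nu (m div 2) < Jst"
    proof (intro notI)
      assume "bessel_zero nu (m div 2) < Jst"
      hence "m div 2 \<in> {n. 1 \<le> n \<and> bessel_zero nu n < Jst}" using n by simp
      hence "m div 2 \<le> k2" using k2 by (rule bspec[rotated])
      thus False using \<open>m div 2 > k2\<close> by simp
    qed
    hence J: "bessel_zero nu (m div 2) \<ge> Jst" by simp
    show ?thesis unfolding Ieq_even[OF ev m1] C_def B_def using pm1(2)[OF n J[unfolded Jst_def]] .
  qed
  define S where "S = insert B (I ` {1..2 * k + 2})"
  have fS: "finite S" "S \<noteq> {}" unfolding S_def by auto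
  have Sp: "\<forall>y\<in>S. y > 0" unfolding S_def using Bp pos by auto
  show ?thesis
  proof (intro exI[of _ "Min S"] conjI allI impI)
    show "Min S > 0" using Sp fS Min_in by blast
    fix m :: nat assume m: "m \<ge> 1"
    show "Min S \<le> integral {a..b} (\<lambda>x. (Phi_tilde \<alpha> m x)\<^sup>2)"
    proof (cases "m \<le> 2 * k + 2")
      case True
      hence "I m \<in> S" unfolding S_def using m by auto
      thus ?thesis unfolding I_def using Min_le[OF fS(1)] by auto
    next
      case False
      hence "I m \<ge> B" using big by simp
      moreover have "Min S \<le> B" using Min_le[OF fS(1)] unfolding S_def by auto
      ultimately show ?thesis unfolding I_def by simp
    qed
  qed
qed

end
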